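(* Let $p(z)$, $E$, $\Sigma_1$, $\Sigma_2$ be as in the context. Then \[ \mathrm{Im}\,(p(z)-E)>0\quad\text{for } z\in\mathbb{C}^+\setminus\Sigma_1,\qquad \mathrm{Im}\,(p(z)-E)<0\quad\text{for } z\in\mathbb{C}^-\setminus\Sigma_2 . \]
   Context: Fix $z_j=\xi_j+\mathrm{i}\eta_j$ ($j=1,2$) with $0<\eta_1<\eta_2$, and consider the genus-one Riemann surface $R^2=(z-z_1)(z-\bar z_1)(z-z_2)(z-\bar z_2)$, with sheet 1 determined by $R>0$ for $\mathrm{Re}\,z>0$ large, a canonical homology basis $\mathcal{A},\mathcal{B}$ satisfying $\sigma(\mathcal{A})=-\mathcal{A}$, $\sigma(\mathcal{B})=\mathcal{B}$ under the anti-holomorphic involution $\sigma(z,R)=(\bar z,\bar R)$. Let $\mathrm{d}p$ be the unique meromorphic differential of the second kind with $\mathrm{d}p=\pm(1+\mathcal{O}(z^{-2}))\mathrm{d}z$ as $z\to\infty^\pm$ and $\oint_{\mathcal{A}}\mathrm{d}p=0$ (explicitly $\mathrm{d}p=\frac{z^2-\mathrm{Re}(z_1+z_2)z+c_0}{R}\mathrm{d}z$ for a real constant $c_0$). Let $p(z)=\int_{z_2}^z\mathrm{d}p$ on sheet 1, so that $p(z)=z+E+\mathcal{O}(z^{-1})$ as $z\to\infty$, with $E\in\mathbb{R}$. It is assumed that the level set $\{z:\mathrm{Im}\,p(z)=0\}$ consists of $\mathbb{R}$ together with two arcs not meeting $\mathbb{R}$: $\Sigma_1\subset\mathbb{C}^+$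 joining $z_1$ to $z_2$ and $\Sigma_2=\overline{\Sigma_1}\subset\mathbb{C}^-$ joining $\bar z_1$ to $\bar z_2$; these are the branch cuts of $R$, and $p$ is single-valued and analytic on $\mathbb{C}\setminus(\Sigma_1\cup\Sigma_2)$ (the $\mathcal{A}$-normalization makes it single valued). *)

theory Defs
  imports "HOL-Complex_Analysis.Complex_Analysis"
begin

text \<open>The quartic whose square root defines the genus-one surface:
  R(z)^2 = (z - z1)(z - conj z1)(z - z2)(z - conj z2).\<close>
definition quartic :: "complex \<Rightarrow> complex \<Rightarrow> complex \<Rightarrow> complex" where
  "quartic z1 z2 z = (z - z1) * (z - cnj z1) * (z - z2) * (z - cnj z2)"

definition dp_density ::
  "complex \<Rightarrow> complex \<Rightarrow> real \<Rightarrow> (complex \<Rightarrow> complex) \<Rightarrow> complex \<Rightarrow> complex" where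
  "dp_density z1 z2 c0 R z =
     (z^2 - of_real (Re (z1 + z2)) * z + of_real c0) / R z"

end

theory Submission imports Defs begin

lemma upper_conn:
  fixes \<gamma> :: "real \<Rightarrow> complex"
  assumes "arc \<gamma>" "\<forall>w\<in>path_image \<gamma>. Im w > 0"
  shows "path_connected ({z. Im z > 0} - path_image \<gamma>)"
proof -
  let ?K = "path_image \<gamma>"
  have cK: "compact ?K" using assms(1) arc_imp_path compact_path_image by blast
  obtain m where m: "m > 0" "\<forall>w\<in>?K. m \<le> Im w"
  proof (cases "?K = {}")
    case True then show ?thesis using that[of 1] by auto
  next
    case False
    have "continuous_on ?K Im" by (intro continuous_intros)
    then obtain w0 where "w0 \<in> ?K" "\<forall>w\<in>?K. Im w0 \<le> Im w"
      using continuous_attains_inf[OF cK False] by blast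
    then show ?thesis using that[of "Im w0"] assms(2) by auto
  qed
  have pc: "path_connected (- ?K)"
    using path_connected_arc_complement[OF assms(1)] by simp
  show ?thesis unfolding path_connected_def
  proof (intro ballI)
    fix x y assume x: "x \<in> {z. Im z > 0} - ?K" and y: "y \<in> {z. Im z > 0} - ?K"
    then obtain g where g: "path g" "path_image g \<subseteq> - ?K" "pathstart g = x" "pathfinish g = y"
      using pc unfolding path_connected_def by blast
    define d where "d = min m (min (Im x) (Im y)) / 2"
    have d: "d > 0" "d < m" "d < Im x" "d < Im y" using x y m unfolding d_def by auto
    define h where "h t = of_real (Re (g t)) + \<i> * of_real (max (Im (g t)) d)" for t
    have hc: "continuous_on {0..1} h" unfolding h_def
      using g(1) unfolding path_def by (intro continuous_intros) auto
    have hIm: "Im (h t) = max (Im (g t)) d" for t by (simp add: h_def)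
    have heq: "Im (g t) \<ge> d \<Longrightarrow> h t = g t" for t
      by (simp add: h_def complex_eq_iff)
    have "path h" using hc unfolding path_def by simp
    moreover have "path_image h \<subseteq> {z. Im z > 0} - ?K"
    proof
      fix z assume "z \<in> path_image h"
      then obtain t where t: "t \<in> {0..1}" "z = h t" unfolding path_image_def by auto
      have "Im z > 0" using t hIm d by auto
      moreover have "z \<notin> ?K"
      proof (cases "Im (g t) \<ge> d")
        case True
        then have "z = g t" using t heq by simp
        moreover have "g t \<in> path_image g" using t by (simp add: path_image_def)
        ultimately show ?thesis using g(2) by blast
      next
        case False
        then have "Im z = d" using t hIm by simp
        then show ?thesis using m d by auto
      qed
      ultimately show "z \<in> {z. Im z > 0} - ?K" by simp
    qed
    moreover have "pathstart h = x" using heq[of 0] g(3) d unfolding pathstart_def by simp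
    moreover have "pathfinish h = y" using heq[of 1] g(4) d unfolding pathfinish_def by simp
    ultimately show "\<exists>g. path g \<and> path_image g \<subseteq> {z. Im z > 0} - ?K \<and> pathstart g = x \<and> pathfinish g = y"
      by blast
  qed
qed


lemma sign_const:
  fixes f :: "complex \<Rightarrow> real"
  assumes "connected U" "continuous_on U f" "\<forall>z\<in>U. f z \<noteq> 0" "x0 \<in> U" "f x0 > 0" "z \<in> U"
  shows "f z > 0"
proof (rule ccontr)
  assume "\<not> f z > 0"
  then have "f z < 0" using assms by force
  have "connected (f ` U)" using assms connected_continuous_image by blast
  then have "(0::real) \<in> f ` U"
    unfolding connected_iff_interval using \<open>f z < 0\<close> assms
    by (metis image_eqI less_imp_le)
  then show False using assms by auto
qed

theorem lemma2p1:
  fixes z1 z2 :: complex and c0 E :: real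
    and \<gamma> :: "real \<Rightarrow> complex"
    and \<Sigma>1 \<Sigma>2 :: "complex set"
    and R p :: "complex \<Rightarrow> complex"
  assumes heta: "0 < Im z1" "Im z1 < Im z2"
    (* \<Sigma>1: an arc in the open upper half plane joining z1 to z2; \<Sigma>2 its mirror image *)
    and harc: "arc \<gamma>" "pathstart \<gamma> = z1" "pathfinish \<gamma> = z2"
    and hS1: "\<Sigma>1 = path_image \<gamma>"
    and hS1up: "\<forall>w\<in>\<Sigma>1. Im w > 0"
    and hS2: "\<Sigma>2 = cnj ` \<Sigma>1"
    (* R: the sheet-1 branch of the square root, with branch cuts \<Sigma>1, \<Sigma>2 *)
    and hRhol: "R holomorphic_on (- (\<Sigma>1 \<union> \<Sigma>2))"
    and hRsq: "\<forall>z\<in>- (\<Sigma>1 \<union> \<Sigma>2). (R z)^2 = quartic z1 z2 z"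
    and hRsheet: "\<exists>M. \<forall>x::real. x > M \<longrightarrow> Im (R (of_real x)) = 0 \<and> Re (R (of_real x)) > 0"
    (* p = \<integral>_{z2}^z dp, single-valued analytic on C minus the cuts (A-normalisation) *)
    and hpderiv: "\<forall>z\<in>- (\<Sigma>1 \<union> \<Sigma>2). (p has_field_derivative dp_density z1 z2 c0 R z) (at z)"
    and hpz2: "(p \<longlongrightarrow> 0) (at z2 within (- (\<Sigma>1 \<union> \<Sigma>2)))"
    (* p(z) = z + E + O(1/z) at infinity, E real *)
    and hE: "((\<lambda>z. p z - z) \<longlongrightarrow> of_real E) at_infinity"
    (* level set of Im p: the real line (off the cuts) together with the cuts \<Sigma>1, \<Sigma>2 *)
    and hlevel: "{z. z \<notin> \<Sigma>1 \<union> \<Sigma>2 \<and> Im (p z) = 0} = {z. Im z = 0}"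
    and hlevelcuts: "\<forall>w\<in>\<Sigma>1 \<union> \<Sigma>2. ((\<lambda>z. Im (p z)) \<longlongrightarrow> 0) (at w within (- (\<Sigma>1 \<union> \<Sigma>2)))"
  shows "(\<forall>z. Im z > 0 \<and> z \<notin> \<Sigma>1 \<longrightarrow> Im (p z - of_real E) > 0) \<and>
         (\<forall>z. Im z < 0 \<and> z \<notin> \<Sigma>2 \<longrightarrow> Im (p z - of_real E) < 0)"
proof -
  let ?S = "\<Sigma>1 \<union> \<Sigma>2"
  have pg: "path \<gamma>" using harc(1) arc_imp_path by blast
  have c1: "compact \<Sigma>1" using hS1 compact_path_image pg by blast
  have c2: "compact \<Sigma>2" unfolding hS2
    by (rule compact_continuous_image[OF _ c1]) (intro continuous_intros)
  have clS: "closed ?S" using c1 c2 compact_imp_closed by blast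
  have opS: "open (- ?S)" by (rule open_Compl[OF clS])
  have contp: "continuous_on (- ?S) p"
    using hpderiv by (intro continuous_at_imp_continuous_on) (auto intro: DERIV_isCont)
  have contIm: "continuous_on (- ?S) (\<lambda>z. Im (p z))"
    by (intro continuous_intros contp)
  have S2low: "\<forall>w\<in>\<Sigma>2. Im w < 0" using hS1up hS2 by auto
  have nz: "Im (p z) \<noteq> 0" if "z \<notin> ?S" "Im z \<noteq> 0" for z
    using hlevel that by blast
  obtain B where B: "\<forall>w\<in>\<Sigma>1. norm w \<le> B"
    using compact_imp_bounded[OF c1] bounded_iff by blast
  have lim1: "filterlim (\<lambda>y::real. \<i> * of_real y) at_infinity at_top"
    unfolding filterlim_at_infinity_conv_norm_at_top
    by (simp add: norm_mult) (rule filterlim_abs_real)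
  have lim2: "filterlim (\<lambda>y::real. - \<i> * of_real y) at_infinity at_top"
    unfolding filterlim_at_infinity_conv_norm_at_top
    by (simp add: norm_mult) (rule filterlim_abs_real)
  have t1: "((\<lambda>y::real. p (\<i> * of_real y) - \<i> * of_real y) \<longlongrightarrow> of_real E) at_top"
    using filterlim_compose[OF hE lim1] by (simp add: o_def)
  have t2: "((\<lambda>y::real. p (- \<i> * of_real y) - (- \<i> * of_real y)) \<longlongrightarrow> of_real E) at_top"
    using filterlim_compose[OF hE lim2] by (simp add: o_def)
  have t1': "((\<lambda>y::real. Im (p (\<i> * of_real y)) - y) \<longlongrightarrow> 0) at_top"
    using tendsto_Im[OF t1] by simp
  have t2': "((\<lambda>y::real. Im (p (- \<i> * of_real y)) + y) \<longlongrightarrow> 0) at_top"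
    using tendsto_Im[OF t2] by simp
  have ev1: "eventually (\<lambda>y. \<bar>Im (p (\<i> * of_real y)) - y\<bar> < 1/2) at_top"
    using tendstoD[OF t1', of "1/2"] by (simp add: dist_real_def)
  have ev2: "eventually (\<lambda>y. \<bar>Im (p (- \<i> * of_real y)) + y\<bar> < 1/2) at_top"
    using tendstoD[OF t2', of "1/2"] by (simp add: dist_real_def)
  have ev3: "eventually (\<lambda>y::real. y > max B 1) at_top" by (rule eventually_gt_at_top)
  obtain y where y: "\<bar>Im (p (\<i> * of_real y)) - y\<bar> < 1/2" "\<bar>Im (p (- \<i> * of_real y)) + y\<bar> < 1/2"
     "y > max B 1"
    using eventually_happens'[OF _ eventually_conj[OF ev1 eventually_conj[OF ev2 ev3]]] by auto
  define U where "U = {z. Im z > 0} - \<Sigma>1"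
  define L where "L = {z. Im z < 0} - \<Sigma>2"
  have UL: "L = cnj ` U"
  proof
    show "L \<subseteq> cnj ` U"
    proof
      fix z assume "z \<in> L"
      then have "cnj z \<in> U" unfolding L_def U_def hS2 by (auto simp: image_iff)
      then show "z \<in> cnj ` U" by (metis complex_cnj_cnj image_eqI)
    qed
    show "cnj ` U \<subseteq> L" unfolding L_def U_def hS2 by auto
  qed
  have cU: "connected U" unfolding U_def hS1
    using upper_conn[OF harc(1)] hS1up hS1 path_connected_imp_connected by blast
  have cL: "connected L" unfolding UL
    by (rule connected_continuous_image[OF _ cU]) (intro continuous_intros)
  have US: "U \<subseteq> - ?S" unfolding U_def using S2low by auto
  have LS: "L \<subseteq> - ?S" unfolding L_def using hS1up by auto
  have iyU: "\<i> * of_real y \<in> U"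
  proof -
    have "norm (\<i> * of_real y) = y" using y(3) by (simp add: norm_mult)
    then show ?thesis unfolding U_def using B y(3) by force
  qed
  have iyL: "- \<i> * of_real y \<in> L"
  proof -
    have "- \<i> * of_real y \<notin> \<Sigma>2"
    proof
      assume "- \<i> * of_real y \<in> \<Sigma>2"
      then obtain x where x: "x \<in> \<Sigma>1" "- \<i> * of_real y = cnj x" unfolding hS2 by auto
      then have "x = \<i> * of_real y" by (simp add: complex_eq_iff)
      then have "\<i> * of_real y \<in> \<Sigma>1" using x by simp
      moreover have "norm (\<i> * of_real y) = y" using y(3) by (simp add: norm_mult)
      ultimately show False using B y(3) by force
    qed
    then show ?thesis unfolding L_def using y(3) by simp
  qed
  have part1: "Im (p z) > 0" if "z \<in> U" for z
    by (rule sign_const[OF cU continuous_on_subset[OF contIm US] _ iyU _ that])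
       (use nz US U_def y in auto)
  have part2: "- Im (p z) > 0" if "z \<in> L" for z
    by (rule sign_const[OF cL continuous_on_subset[OF continuous_on_minus[OF contIm] LS] _ iyL _ that])
       (use nz LS L_def y in auto)
  show ?thesis using part1 part2 unfolding U_def L_def by auto
qed

end
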